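(* Let $T$ be a finite tree with $n$ simplices (vertices plus edges), and let $D$ be a persistence diagram consistent with $T$. Then there exists a discrete Morse function $f\colon T\to[0,n]$ whose induced (degree-$0$) persistence diagram satisfies $D_f=D$.
   Context: For a finite simple graph $G$, its simplices are its vertices and edges; write $v<e$ if vertex $v$ is an endpoint of edge $e$. Let $n$ be the total number of simplices. A discrete Morse function is a function $f$ from the set of simplices of $G$ to $[0,n]$ such that: (i) $v<e$ implies $f(v)\le f(e)$; (ii) $\min f=0$; (iii) every value is attained by at most two simplices, and if $f(\sigma)=f(\tau)$ with $\sigma\neq\tau$ then one of $\sigma,\tau$ is an endpoint of the other; (iv) if a value $f(\sigma)$ is attained only by $\sigma$, then $f(\sigma)\in\mathbb{N}$. Such $\sigma$ is called critical and $f(\sigma)$ a critical value. For $a\in\mathbb{R}$ the level subcomplex is $G_a=\{\sigma: f(\sigma)\le a\}$ (a subgraph). If $c_0<c_1<\dots<c_{m-1}$ are the critical values, $f$ induces the filtration $G_{c_0}\subseteq\dots\subseteq G_{c_{m-1}}$, and its persistent homology (over a field) gives a persistence diagram $D_f$: the multiset of pairs (birth value, death value) of homology classes, with death value $\infty$ for classes that never die. For a tree only degree-$0$ homology occurs. A persistence diagram $D=\{(c_i,d_i)\}$ (a finite set of pairs) is consistent with a tree $T$ on $n$ simplices if $(0,\infty)\in D$ and for all $c_i,d_j$ occurring in pairs of $D\setminus\{(0,\infty)\}$: $c_i,d_j\in\mathbb{Z}$; $1\le c_i,d_j\le n$; $c_i<d_i$ and $c_i<c_j$ for $i<j$; and all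 the numbers $c_i,d_j$ are pairwise distinct. *)

theory Defs
  imports Complex_Main "HOL-Library.Multiset" "HOL-Library.Extended_Real"
begin

text \<open>Simplices are represented as sets: a vertex v is the simplex {v},
an edge is {u,w}. The face relation v < e is then {v} \<subset> e, i.e. v \<in> e.\<close>

definition simple_graph :: "'a set \<Rightarrow> 'a set set \<Rightarrow> bool" where
  "simple_graph V E \<longleftrightarrow> finite V \<and> (\<forall>e\<in>E. \<exists>u w. u \<in> V \<and> w \<in> V \<and> u \<noteq> w \<and> e = {u, w})"

definition graph_connected :: "'a set \<Rightarrow> 'a set set \<Rightarrow> bool" where
  "graph_connected V E \<longleftrightarrow> (\<forall>u\<in>V. \<forall>w\<in>V. (\<lambda>x y. {x, y} \<in> E)\<^sup>*\<^sup>* u w)"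

definition is_cycle :: "'a set set \<Rightarrow> 'a list \<Rightarrow> bool" where
  "is_cycle E vs \<longleftrightarrow> length vs \<ge> 3 \<and> distinct vs \<and>
     (\<forall>i < length vs. {vs ! i, vs ! ((i + 1) mod length vs)} \<in> E)"

definition acyclic_graph :: "'a set \<Rightarrow> 'a set set \<Rightarrow> bool" where
  "acyclic_graph V E \<longleftrightarrow> \<not> (\<exists>vs. set vs \<subseteq> V \<and> is_cycle E vs)"

definition is_tree :: "'a set \<Rightarrow> 'a set set \<Rightarrow> bool" where
  "is_tree V E \<longleftrightarrow> simple_graph V E \<and> V \<noteq> {} \<and> graph_connected V E \<and> acyclic_graph V E"

definition simplices :: "'a set \<Rightarrow> 'a set set \<Rightarrow> 'a set set" where
  "simplices V E = (\<lambda>v. {v}) ` V \<union> E"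

definition discrete_morse :: "'a set \<Rightarrow> 'a set set \<Rightarrow> ('a set \<Rightarrow> real) \<Rightarrow> bool" where
  "discrete_morse V E f \<longleftrightarrow>
     (let S = simplices V E; n = card S in
       (\<forall>\<sigma>\<in>S. 0 \<le> f \<sigma> \<and> f \<sigma> \<le> real n) \<and>
       (\<forall>v\<in>V. \<forall>e\<in>E. v \<in> e \<longrightarrow> f {v} \<le> f e) \<and>
       (\<exists>\<sigma>\<in>S. f \<sigma> = 0) \<and>
       (\<forall>x. card {\<sigma>\<in>S. f \<sigma> = x} \<le> 2) \<and>
       (\<forall>\<sigma>\<in>S. \<forall>\<tau>\<in>S. \<sigma> \<noteq> \<tau> \<and> f \<sigma> = f \<tau> \<longrightarrow> \<sigma> \<subset> \<tau> \<or> \<tau> \<subset> \<sigma>) \<and>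
       (\<forall>\<sigma>\<in>S. (\<forall>\<tau>\<in>S. f \<tau> = f \<sigma> \<longrightarrow> \<tau> = \<sigma>) \<longrightarrow> f \<sigma> \<in> \<nat>))"

definition critical_values :: "'a set set \<Rightarrow> ('a set \<Rightarrow> real) \<Rightarrow> real set" where
  "critical_values S f = {f \<sigma> | \<sigma>. \<sigma> \<in> S \<and> (\<forall>\<tau>\<in>S. f \<tau> = f \<sigma> \<longrightarrow> \<tau> = \<sigma>)}"

definition level :: "'a set set \<Rightarrow> ('a set \<Rightarrow> real) \<Rightarrow> real \<Rightarrow> 'a set set" where
  "level S f a = {\<sigma>\<in>S. f \<sigma> \<le> a}"

text \<open>For a subcomplex K (set of simplices), its vertices, its connected components,
and the rank of the map H_0(X) \<rightarrow> H_0(Y) induced by inclusion X \<subseteq> Y, which equals the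
number of components of Y that contain a vertex of X.\<close>

definition cverts :: "'a set set \<Rightarrow> 'a set" where
  "cverts K = {v. {v} \<in> K}"

definition creach :: "'a set set \<Rightarrow> 'a \<Rightarrow> 'a \<Rightarrow> bool" where
  "creach K = (\<lambda>x y. x \<noteq> y \<and> {x, y} \<in> K)\<^sup>*\<^sup>*"

definition ccomp :: "'a set set \<Rightarrow> 'a \<Rightarrow> 'a set" where
  "ccomp K v = {w. creach K v w}"

definition rank_H0 :: "'a set set \<Rightarrow> 'a set set \<Rightarrow> nat" where
  "rank_H0 X Y = card (ccomp Y ` cverts X)"

text \<open>Persistence diagram of a filtration Ks ! 0 \<subseteq> ... \<subseteq> Ks ! (m-1) with filtration
values c 0 < ... < c (m-1): the multiplicity of (c i, c j) is obtained from the
persistent Betti numbers by the usual inclusion-exclusion formula.\<close>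

definition pbetti :: "'a set set list \<Rightarrow> nat \<Rightarrow> nat \<Rightarrow> int" where
  "pbetti Ks i j = int (rank_H0 (Ks ! i) (Ks ! j))"

definition pbetti_before :: "'a set set list \<Rightarrow> nat \<Rightarrow> nat \<Rightarrow> int" where
  "pbetti_before Ks i j = (if i = 0 then 0 else pbetti Ks (i - 1) j)"

definition pers_diagram :: "'a set set list \<Rightarrow> real list \<Rightarrow> (real \<times> ereal) multiset" where
  "pers_diagram Ks cs =
     (let m = length Ks in
       (\<Sum>i<m. \<Sum>j\<in>{i<..<m}.
          replicate_mset (nat (pbetti Ks i (j - 1) - pbetti Ks i j
                               - pbetti_before Ks i (j - 1) + pbetti_before Ks i j))
            (cs ! i, ereal (cs ! j)))
     + (\<Sum>i<m. replicate_mset (nat (pbetti Ks i (m - 1) - pbetti_before Ks i (m - 1)))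
            (cs ! i, PInfty)))"

definition morse_diagram :: "'a set \<Rightarrow> 'a set set \<Rightarrow> ('a set \<Rightarrow> real) \<Rightarrow> (real \<times> ereal) multiset" where
  "morse_diagram V E f =
     (let S = simplices V E;
          cs = sorted_list_of_set (critical_values S f)
      in pers_diagram (map (level S f) cs) cs)"

definition consistent_diagram :: "(real \<times> ereal) set \<Rightarrow> nat \<Rightarrow> bool" where
  "consistent_diagram D n \<longleftrightarrow>
     finite D \<and> (0, PInfty) \<in> D \<and>
     (\<forall>p\<in>D - {(0, PInfty)}.
        fst p \<in> \<int> \<and> (\<exists>d\<in>\<int>. snd p = ereal d) \<and>
        1 \<le> fst p \<and> fst p \<le> real n \<and> 1 \<le> snd p \<and> snd p \<le> ereal (real n) \<and>
        ereal (fst p) < snd p) \<and>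
     (\<forall>p\<in>D - {(0, PInfty)}. \<forall>q\<in>D - {(0, PInfty)}.
        ereal (fst p) \<noteq> snd q \<and> (p \<noteq> q \<longrightarrow> fst p \<noteq> fst q \<and> snd p \<noteq> snd q))"

end

theory Submission
  imports Defs
begin

lemma rtranclp_exit:
  assumes "R\<^sup>*\<^sup>* a b" "a \<in> A" "b \<notin> A"
  shows "\<exists>u w. R u w \<and> u \<in> A \<and> w \<notin> A"
  using assms by (induction rule: rtranclp_induct) auto

lemma simple_path:
  assumes "R\<^sup>*\<^sup>* a b"
  shows "\<exists>p. p \<noteq> [] \<and> distinct p \<and> hd p = a \<and> last p = b \<and>
     (\<forall>i. Suc i < length p \<longrightarrow> R (p ! i) (p ! Suc i))"
  using assms
proof (induction rule: converse_rtranclp_induct)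
  case base
  then show ?case by (intro exI[of _ "[b]"]) auto
next
  case (step a c)
  then obtain p where p: "p \<noteq> []" "distinct p" "hd p = c" "last p = b"
    "\<forall>i. Suc i < length p \<longrightarrow> R (p ! i) (p ! Suc i)" by blast
  show ?case
  proof (cases "a \<in> set p")
    case False
    show ?thesis
      apply (intro exI[of _ "a # p"])
      using p False step(1) apply (auto simp: nth_Cons' hd_conv_nth)
      by (metis Suc_pred)
  next
    case True
    then obtain j where j: "j < length p" "p ! j = a" by (auto simp: in_set_conv_nth)
    show ?thesis
      apply (intro exI[of _ "drop j p"])
      using p j by (auto simp: hd_drop_conv_nth distinct_drop)
  qed
qed

lemma edge_verts:
  assumes "simple_graph V E" "e \<in> E" "x \<in> e" shows "x \<in> V"
proof -
  obtain u w where "u \<in> V" "w \<in> V" "e = {u, w}" using assms unfolding simple_graph_def by metis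
  then show ?thesis using assms by auto
qed
lemma edge_two:
  assumes "simple_graph V E" "e \<in> E" obtains u w where "u \<noteq> w" "e = {u, w}"
  using assms unfolding simple_graph_def by metis

lemma cycle_from_path:
  assumes p: "p \<noteq> []" "distinct p" "hd p = u" "last p = u2"
    "\<forall>i. Suc i < length p \<longrightarrow> {p ! i, p ! Suc i} \<in> E"
    and "u \<noteq> u2" "w \<notin> set p" "{u, w} \<in> E" "{u2, w} \<in> E"
  shows "is_cycle E (w # p)"
proof -
  have len: "length p \<ge> 2"
  proof (rule ccontr)
    assume "\<not> length p \<ge> 2"
    then have "length p = 1" using p(1) by (cases p) (auto simp: Suc_le_eq)
    then have "hd p = last p" by (cases p) auto
    then show False using assms by simp
  qed
  have "{(w # p) ! i, (w # p) ! ((i + 1) mod length (w # p))} \<in> E"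
    if i: "i < length (w # p)" for i
  proof -
    consider "i = 0" | "0 < i \<and> i < length p" | "i = length p" using i by force
    then show ?thesis
    proof cases
      case 1
      then show ?thesis using assms len by (auto simp: hd_conv_nth insert_commute)
    next
      case 2
      then have "(i + 1) mod length (w # p) = i + 1" by simp
      moreover have "Suc (i - 1) < length p" using 2 by simp
      then have "{p ! (i - 1), p ! Suc (i - 1)} \<in> E" using p(5) by blast
      ultimately show ?thesis using 2 by (cases i) auto
    next
      case 3
      then have "(i + 1) mod length (w # p) = 0" by simp
      moreover have "p ! (length p - 1) = u2" using p by (simp add: last_conv_nth)
      ultimately show ?thesis using 3 assms len by (cases i) (auto simp: insert_commute)
    qed
  qed
  then show ?thesis unfolding is_cycle_def using len assms by auto
qed

lemma tree_order_aux:
  assumes tree: "is_tree V E" and k: "Suc k \<le> card V"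
  shows "\<exists>vs par. length vs = Suc k \<and> distinct vs \<and> set vs \<subseteq> V \<and>
     (\<forall>i. 0 < i \<and> i < length vs \<longrightarrow> par i < i) \<and>
     {e\<in>E. e \<subseteq> set vs} = {{vs ! (par i), vs ! i} | i. 0 < i \<and> i < length vs}"
  using k
proof (induction k)
  case 0
  have sg: "simple_graph V E" and ne: "V \<noteq> {}"
    using tree unfolding is_tree_def by auto
  obtain r where r: "r \<in> V" using ne by auto
  have "{e\<in>E. e \<subseteq> set [r]} = {}" using sg by (auto elim!: edge_two)
  then show ?case
    by (intro exI[of _ "[r]"] exI[of _ "\<lambda>i. i"]) (auto simp: r)
next
  case (Suc k)
  have sg: "simple_graph V E"
    and conn: "graph_connected V E" and acyc: "acyclic_graph V E"
    using tree unfolding is_tree_def by auto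
  from Suc.IH Suc.prems obtain vs par where vs: "length vs = Suc k" "distinct vs" "set vs \<subseteq> V"
     "\<forall>i. 0 < i \<and> i < length vs \<longrightarrow> par i < i"
     "{e\<in>E. e \<subseteq> set vs} = {{vs ! (par i), vs ! i} | i. 0 < i \<and> i < length vs}" by auto
  have "card (set vs) = Suc k" using vs distinct_card by metis
  then have "set vs \<noteq> V" using Suc.prems by auto
  then obtain x where x: "x \<in> V" "x \<notin> set vs" using vs(3) by auto
  have v0: "vs ! 0 \<in> set vs" "vs ! 0 \<in> V" using vs by auto
  have "(\<lambda>x y. {x, y} \<in> E)\<^sup>*\<^sup>* (vs ! 0) x" using conn x v0 unfolding graph_connected_def by auto
  from rtranclp_exit[OF this v0(1) x(2)] obtain u w where uw: "{u, w} \<in> E" "u \<in> set vs" "w \<notin> set vs"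
    by auto
  have wV: "w \<in> V" using edge_verts[OF sg uw(1)] by simp
  define R where "R = (\<lambda>x y. {x, y} \<in> E \<and> x \<in> set vs \<and> y \<in> set vs)"
  have reach: "R\<^sup>*\<^sup>* (vs ! 0) (vs ! i) \<and> R\<^sup>*\<^sup>* (vs ! i) (vs ! 0)" if "i < length vs" for i
    using that
  proof (induction i rule: less_induct)
    case (less i)
    show ?case
    proof (cases "i = 0")
      case True
      then show ?thesis by simp
    next
      case False
      then have pi: "par i < i" using vs(4) less.prems by auto
      have "{vs ! (par i), vs ! i} \<in> {e\<in>E. e \<subseteq> set vs}"
        unfolding vs(5) using False less.prems by blast
      then have "R (vs ! (par i)) (vs ! i)" "R (vs ! i) (vs ! (par i))"
        unfolding R_def by (auto simp: insert_commute)
      moreover have "R\<^sup>*\<^sup>* (vs ! 0) (vs ! par i) \<and> R\<^sup>*\<^sup>* (vs ! par i) (vs ! 0)"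
        using less.IH[of "par i"] pi less.prems by auto
      ultimately show ?thesis
        by (meson converse_rtranclp_into_rtranclp rtranclp.rtrancl_into_rtrancl)
    qed
  qed
  have uniq: "y = u" if y: "{y, w} \<in> E" "y \<in> set vs" for y
  proof (rule ccontr)
    assume yu: "y \<noteq> u"
    obtain iu iy where "iu < length vs" "vs ! iu = u" "iy < length vs" "vs ! iy = y"
      using uw y by (auto simp: in_set_conv_nth)
    then have "R\<^sup>*\<^sup>* u y" using reach by (metis rtranclp_trans)
    from simple_path[OF this] obtain p where p: "p \<noteq> []" "distinct p" "hd p = u" "last p = y"
      "\<forall>i. Suc i < length p \<longrightarrow> R (p ! i) (p ! Suc i)" by blast
    have ps: "set p \<subseteq> set vs"
    proof
      fix z assume "z \<in> set p"
      then obtain j where j: "j < length p" "p ! j = z" by (auto simp: in_set_conv_nth)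
      show "z \<in> set vs"
      proof (cases "Suc j < length p")
        case True
        then show ?thesis using p(5) j unfolding R_def by auto
      next
        case False
        then have "j = length p - 1" using j by auto
        then show ?thesis using j p y by (simp add: last_conv_nth)
      qed
    qed
    have "is_cycle E (w # p)"
      apply (rule cycle_from_path[OF p(1-4) _ yu[symmetric]])
      using p(5) ps uw y unfolding R_def by (auto simp: insert_commute)
    moreover have "set (w # p) \<subseteq> V" using ps vs(3) wV by auto
    ultimately show False using acyc unfolding acyclic_graph_def by blast
  qed
  obtain iu where iu: "iu < length vs" "vs ! iu = u" using uw by (auto simp: in_set_conv_nth)
  define vs' where "vs' = vs @ [w]"
  define par' where "par' = par(length vs := iu)"
  have nth': "vs' ! i = vs ! i" if "i < length vs" for i using that unfolding vs'_def by (simp add: nth_append)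
  have last': "vs' ! length vs = w" unfolding vs'_def by simp
  have "{e\<in>E. e \<subseteq> set vs'} = {e\<in>E. e \<subseteq> set vs} \<union> {{u, w}}"
  proof (intro equalityI subsetI)
    fix e assume e: "e \<in> {e\<in>E. e \<subseteq> set vs'}"
    then obtain a b where ab: "a \<noteq> b" "e = {a, b}" "e \<in> E" using sg by (auto elim!: edge_two)
    show "e \<in> {e\<in>E. e \<subseteq> set vs} \<union> {{u, w}}"
    proof (cases "w \<in> e")
      case False
      then show ?thesis using e unfolding vs'_def by auto
    next
      case True
      then consider "a = w" | "b = w" using ab by auto
      then show ?thesis
      proof cases
        case 1
        then have "b \<in> set vs" using e ab unfolding vs'_def by auto
        then have "b = u" using uniq ab 1 by (auto simp: insert_commute)
        then show ?thesis using ab 1 by (auto simp: insert_commute)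
      next
        case 2
        then have "a \<in> set vs" using e ab unfolding vs'_def by auto
        then have "a = u" using uniq ab 2 by (auto simp: insert_commute)
        then show ?thesis using ab 2 by (auto simp: insert_commute)
      qed
    qed
  next
    fix e assume "e \<in> {e\<in>E. e \<subseteq> set vs} \<union> {{u, w}}"
    then show "e \<in> {e\<in>E. e \<subseteq> set vs'}" using uw unfolding vs'_def by auto
  qed
  also have "\<dots> = {{vs' ! (par' i), vs' ! i} | i. 0 < i \<and> i < length vs'}"
  proof (intro equalityI subsetI)
    fix e assume "e \<in> {e\<in>E. e \<subseteq> set vs} \<union> {{u, w}}"
    then consider "e \<in> {{vs ! (par i), vs ! i} | i. 0 < i \<and> i < length vs}" | "e = {u, w}"
      unfolding vs(5) by blast
    then show "e \<in> {{vs' ! (par' i), vs' ! i} | i. 0 < i \<and> i < length vs'}"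
    proof cases
      case 1
      then obtain i where i: "0 < i" "i < length vs" "e = {vs ! (par i), vs ! i}" by blast
      then have "e = {vs' ! (par' i), vs' ! i}" using vs(4) nth' unfolding par'_def by auto
      then show ?thesis using i unfolding vs'_def by force
    next
      case 2
      have "e = {vs' ! (par' (length vs)), vs' ! (length vs)}"
        using 2 iu nth' last' unfolding par'_def by auto
      moreover have "0 < length vs" using vs by simp
      ultimately show ?thesis unfolding vs'_def by force
    qed
  next
    fix e assume "e \<in> {{vs' ! (par' i), vs' ! i} | i. 0 < i \<and> i < length vs'}"
    then obtain i where i: "0 < i" "i < length vs'" "e = {vs' ! (par' i), vs' ! i}" by blast
    show "e \<in> {e\<in>E. e \<subseteq> set vs} \<union> {{u, w}}"
    proof (cases "i < length vs")
      case True
      then have "e = {vs ! (par i), vs ! i}" using i vs(4) nth' unfolding par'_def by auto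
      then show ?thesis unfolding vs(5) using i True by blast
    next
      case False
      then have "i = length vs" using i unfolding vs'_def by simp
      then have "e = {u, w}" using i iu nth' last' unfolding par'_def by auto
      then show ?thesis by blast
    qed
  qed
  finally have E': "{e\<in>E. e \<subseteq> set vs'} = {{vs' ! (par' i), vs' ! i} | i. 0 < i \<and> i < length vs'}" .
  have "length vs' = Suc (Suc k)" "distinct vs'" "set vs' \<subseteq> V"
    using vs uw wV unfolding vs'_def by auto
  moreover have "\<forall>i. 0 < i \<and> i < length vs' \<longrightarrow> par' i < i"
    using vs(4) iu unfolding vs'_def par'_def by auto
  ultimately show ?case using E' by blast
qed

lemma tree_order:
  assumes tree: "is_tree V E"
  shows "\<exists>vs par. vs \<noteq> [] \<and> distinct vs \<and> set vs = V \<and>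
     (\<forall>i. 0 < i \<and> i < length vs \<longrightarrow> par i < i) \<and>
     E = {{vs ! (par i), vs ! i} | i. 0 < i \<and> i < length vs}"
proof -
  have fin: "finite V" and ne: "V \<noteq> {}" and sg: "simple_graph V E"
    using tree unfolding is_tree_def simple_graph_def by auto
  have "card V > 0" using fin ne by auto
  then obtain k where k: "card V = Suc k" using gr0_conv_Suc by auto
  from tree_order_aux[OF tree, of k] k obtain vs par where vs: "length vs = Suc k" "distinct vs" "set vs \<subseteq> V"
     "\<forall>i. 0 < i \<and> i < length vs \<longrightarrow> par i < i"
     "{e\<in>E. e \<subseteq> set vs} = {{vs ! (par i), vs ! i} | i. 0 < i \<and> i < length vs}" by auto
  have "card (set vs) = card V" using vs k distinct_card by metis
  then have sv: "set vs = V" using card_subset_eq[OF fin vs(3)] by simp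
  have "{e\<in>E. e \<subseteq> set vs} = E"
  proof (intro equalityI subsetI)
    fix e assume "e \<in> E"
    then show "e \<in> {e\<in>E. e \<subseteq> set vs}" using edge_verts[OF sg] sv by auto
  qed auto
  then have "E = {{vs ! (par i), vs ! i} | i. 0 < i \<and> i < length vs}" using vs(5) by simp
  moreover have "vs \<noteq> []" using vs(1) by auto
  ultimately show ?thesis using vs(2,4) sv by blast
qed

lemma int_nat_real: "(x::real) \<in> \<int> \<Longrightarrow> 0 \<le> x \<Longrightarrow> \<exists>n::nat. x = real n"
  by (metis Ints_cases of_int_0_le_iff of_nat_nat)

locale tconstr =
  fixes V :: "'a set" and E :: "'a set set" and vs :: "'a list" and par :: "nat \<Rightarrow> nat"
    and D :: "(real \<times> ereal) set"
  assumes vs_ne: "vs \<noteq> []" and vs_dist: "distinct vs" and vs_set: "set vs = V"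
  and par_lt: "\<And>i. 0 < i \<Longrightarrow> i < length vs \<Longrightarrow> par i < i"
  and E_eq: "E = {{vs ! (par i), vs ! i} | i. 0 < i \<and> i < length vs}"
  and cons: "consistent_diagram D (card (simplices V E))"
begin

definition "N = length vs"
definition "nn = card (simplices V E)"
definition "D' = D - {(0, PInfty)}"
definition "dd p = real_of_ereal (snd p)"
definition "k = card D'"
definition "m = N - 1 - k"
definition "Ds = sorted_list_of_set (dd ` D')"
definition "q t = the_inv_into D' dd (Ds ! t)"
definition "b t = fst (q t)"
definition "d t = Ds ! t"
definition "ed i = {vs ! (par i), vs ! i}"
definition "fv i = (if i = 0 then 0 else if i \<le> m then real i / real N else b (i - Suc m))"
definition "fe i = (if i \<le> m then real i / real N else d (i - Suc m))"
definition "idx v = the_inv_into {..<N} ((!) vs) v"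
definition "F \<sigma> = (if card \<sigma> = 1 then fv (idx (the_elem \<sigma>)) else fe (Max (idx ` \<sigma>)))"

lemma N_pos: "0 < N" using vs_ne unfolding N_def by simp

lemma D'_facts:
  assumes "p \<in> D'"
  shows "fst p \<in> \<int>" "1 \<le> fst p" "snd p = ereal (dd p)" "dd p \<in> \<int>" "fst p < dd p" "dd p \<le> real nn"
proof -
  have c: "fst p \<in> \<int> \<and> (\<exists>d\<in>\<int>. snd p = ereal d) \<and>
        1 \<le> fst p \<and> fst p \<le> real nn \<and> 1 \<le> snd p \<and> snd p \<le> ereal (real nn) \<and>
        ereal (fst p) < snd p"
    using cons[unfolded consistent_diagram_def, THEN conjunct2, THEN conjunct2, THEN conjunct1]
      assms unfolding D'_def nn_def by (rule bspec)
  then obtain x where x: "x \<in> \<int>" "snd p = ereal x" by blast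
  have ddx: "dd p = x" unfolding dd_def x by simp
  show "fst p \<in> \<int>" "1 \<le> fst p" "snd p = ereal (dd p)" "dd p \<in> \<int>" using c x ddx by auto
  show "fst p < dd p" "dd p \<le> real nn" using c x ddx by auto
qed

lemma D'_pairs:
  assumes "p \<in> D'" "p' \<in> D'"
  shows "fst p \<noteq> dd p'" and "p \<noteq> p' \<Longrightarrow> fst p \<noteq> fst p'" and "p \<noteq> p' \<Longrightarrow> dd p \<noteq> dd p'"
proof -
  have c: "ereal (fst p) \<noteq> snd p' \<and> (p \<noteq> p' \<longrightarrow> fst p \<noteq> fst p' \<and> snd p \<noteq> snd p')"
  proof -
    have "\<forall>p\<in>D'. \<forall>q\<in>D'. ereal (fst p) \<noteq> snd q \<and> (p \<noteq> q \<longrightarrow> fst p \<noteq> fst q \<and> snd p \<noteq> snd q)"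
      using cons[unfolded consistent_diagram_def, THEN conjunct2, THEN conjunct2, THEN conjunct2]
      unfolding D'_def .
    then show ?thesis using assms by simp
  qed
  show "fst p \<noteq> dd p'" using c D'_facts(3)[OF assms(2)] by auto
  show "p \<noteq> p' \<Longrightarrow> fst p \<noteq> fst p'" using c by auto
  show "p \<noteq> p' \<Longrightarrow> dd p \<noteq> dd p'" using c D'_facts(3)[OF assms(1)] D'_facts(3)[OF assms(2)] by auto
qed

lemma fin_D': "finite D'" using cons unfolding consistent_diagram_def D'_def by auto

lemma inj_dd: "inj_on dd D'" unfolding inj_on_def using D'_pairs(3) by blast
lemma inj_fst: "inj_on fst D'" unfolding inj_on_def using D'_pairs(2) by blast

lemma vs_inj: "inj_on ((!) vs) {..<N}"
  using vs_dist unfolding N_def by (simp add: inj_on_nth)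

lemma idx_nth: "i < N \<Longrightarrow> idx (vs ! i) = i"
  unfolding idx_def using vs_inj by (simp add: the_inv_into_f_f)

lemma vs_nth_eq: "i < N \<Longrightarrow> j < N \<Longrightarrow> vs ! i = vs ! j \<longleftrightarrow> i = j"
  using vs_dist unfolding N_def by (simp add: nth_eq_iff_index_eq)

lemma par_lt': "0 < i \<Longrightarrow> i < N \<Longrightarrow> par i < i" using par_lt unfolding N_def by simp

lemma ed_ne: assumes "0 < i" "i < N" shows "vs ! (par i) \<noteq> vs ! i"
proof -
  have "par i < i" using par_lt' assms by simp
  then show ?thesis using vs_nth_eq[of "par i" i] assms by simp
qed

lemma E_ed: "E = ed ` {0<..<N}"
  unfolding E_eq ed_def N_def by auto

lemma ed_inj: "inj_on ed {0<..<N}"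
proof (rule inj_onI)
  fix i j assume ij: "i \<in> {0<..<N}" "j \<in> {0<..<N}" "ed i = ed j"
  have pi: "par i < i" "par j < j" using par_lt' ij by auto
  have "vs ! i \<in> ed j" "vs ! j \<in> ed i" using ij(3) unfolding ed_def by auto
  then have "(vs ! i = vs ! par j \<or> vs ! i = vs ! j) \<and> (vs ! j = vs ! par i \<or> vs ! j = vs ! i)"
    unfolding ed_def by auto
  then have "(i = par j \<or> i = j) \<and> (j = par i \<or> j = i)"
    using vs_nth_eq[of i "par j"] vs_nth_eq[of i j] vs_nth_eq[of j "par i"] pi ij by auto
  then show "i = j" using pi by auto
qed

lemma card_E: "card E = N - 1"
  using E_ed ed_inj by (simp add: card_image)

lemma V_eq: "V = (!) vs ` {..<N}"
  unfolding vs_set[symmetric] N_def by (auto simp: in_set_conv_nth)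

lemma simplices_eq: "simplices V E = (\<lambda>i. {vs ! i}) ` {..<N} \<union> ed ` {0<..<N}"
  unfolding simplices_def E_ed V_eq image_image by simp

lemma card_ed: "0 < i \<Longrightarrow> i < N \<Longrightarrow> card (ed i) = 2"
  unfolding ed_def using ed_ne by auto

lemma nn_eq: "nn = 2 * N - 1"
proof -
  have inj1: "inj_on (\<lambda>i. {vs ! i}) {..<N}"
  proof (rule inj_onI)
    fix i j assume "i \<in> {..<N}" "j \<in> {..<N}" "{vs ! i} = {vs ! j}"
    then show "i = j" using vs_nth_eq[of i j] by simp
  qed
  have c1: "card ((\<lambda>i. {vs ! i}) ` {..<N}) = N"
    using card_image[OF inj1] by simp
  have c2: "card (ed ` {0<..<N}) = N - 1"
    using card_E E_ed by simp
  have disj: "(\<lambda>i. {vs ! i}) ` {..<N} \<inter> ed ` {0<..<N} = {}"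
  proof (rule ccontr)
    assume "(\<lambda>i. {vs ! i}) ` {..<N} \<inter> ed ` {0<..<N} \<noteq> {}"
    then obtain i j where ij: "{vs ! i} = ed j" "0 < j" "j < N" by auto
    have "card (ed j) = 2" using card_ed ij by simp
    moreover have "card {vs ! i} = 1" by simp
    ultimately show False using ij(1) by simp
  qed
  have "card (simplices V E) = N + (N - 1)"
    unfolding simplices_eq using card_Un_disjoint[OF _ _ disj] c1 c2 by simp
  then show ?thesis unfolding nn_def using N_pos by simp
qed

lemma card_fst: "card (fst ` D') = k" unfolding k_def using inj_fst by (simp add: card_image)
lemma card_dd: "card (dd ` D') = k" unfolding k_def using inj_dd by (simp add: card_image)

lemma k_le: "k \<le> N - 1"
proof -
  have sub: "fst ` D' \<union> dd ` D' \<subseteq> real ` {1..nn}"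
  proof
    fix x assume "x \<in> fst ` D' \<union> dd ` D'"
    then obtain p where p: "p \<in> D'" "x = fst p \<or> x = dd p" by auto
    have x: "x \<in> \<int>" "1 \<le> x" "x \<le> real nn" using D'_facts[OF p(1)] p(2) by auto
    obtain n where n: "x = real n" using int_nat_real[OF x(1)] x(2) by auto
    have "n \<in> {1..nn}" using x n by auto
    then show "x \<in> real ` {1..nn}" using n by blast
  qed
  have disj: "fst ` D' \<inter> dd ` D' = {}" using D'_pairs(1) by fastforce
  have "card (fst ` D' \<union> dd ` D') = 2 * k"
    using card_fst card_dd disj fin_D' by (simp add: card_Un_disjoint)
  moreover have "card (real ` {1..nn}) = nn" by (simp add: card_image)
  moreover have "card (fst ` D' \<union> dd ` D') \<le> card (real ` {1..nn})"
    by (rule card_mono[OF _ sub]) simp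
  ultimately have "2 * k \<le> nn" by simp
  then show ?thesis using nn_eq by simp
qed

lemma N_eq: "N = Suc (m + k)" unfolding m_def using k_le N_pos by simp

lemma Ds_len: "length Ds = k" unfolding Ds_def using card_dd by simp
lemma Ds_sorted: "sorted_wrt (<) Ds" unfolding Ds_def by simp
lemma Ds_set: "set Ds = dd ` D'" unfolding Ds_def using fin_D' by simp

lemma q_in: "t < k \<Longrightarrow> q t \<in> D'" and dd_q: "t < k \<Longrightarrow> dd (q t) = d t"
proof -
  assume t: "t < k"
  then have "Ds ! t \<in> dd ` D'" using Ds_len Ds_set nth_mem by metis
  then show "q t \<in> D'" "dd (q t) = d t" unfolding q_def d_def using inj_dd
    by (auto simp: the_inv_into_into f_the_inv_into_f)
qed

lemma d_mono: "t < t' \<Longrightarrow> t' < k \<Longrightarrow> d t < d t'"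
  unfolding d_def using Ds_sorted Ds_len by (simp add: sorted_wrt_nth_less)

lemma d_inj: "t < k \<Longrightarrow> t' < k \<Longrightarrow> d t = d t' \<Longrightarrow> t = t'"
  by (metis d_mono less_irrefl linorder_neqE_nat)

lemma q_inj: "inj_on q {..<k}"
  by (rule inj_onI) (metis dd_q d_inj lessThan_iff)

lemma q_surj: "q ` {..<k} = D'"
proof -
  have "q ` {..<k} \<subseteq> D'" using q_in by auto
  moreover have "card (q ` {..<k}) = card D'" using q_inj by (simp add: card_image k_def)
  ultimately show ?thesis using fin_D' by (simp add: card_subset_eq)
qed

lemma q_pair: "t < k \<Longrightarrow> q t = (b t, ereal (d t))"
  using D'_facts(3)[OF q_in] dd_q unfolding b_def by (metis prod.collapse)

lemma bd_facts:
  assumes "t < k"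
  shows "b t \<in> \<int>" "1 \<le> b t" "d t \<in> \<int>" "b t < d t" "d t \<le> real nn"
  using D'_facts[OF q_in[OF assms]] dd_q[OF assms] unfolding b_def by auto

lemma b_inj: assumes "t < k" "t' < k" "b t = b t'" shows "t = t'"
proof -
  have "q t = q t'" using D'_pairs(2)[OF q_in[OF assms(1)] q_in[OF assms(2)]] assms(3) unfolding b_def by blast
  then show ?thesis using q_inj assms(1,2) unfolding inj_on_def by blast
qed

lemma b_ne_d: assumes "t < k" "t' < k" shows "b t \<noteq> d t'"
  using D'_pairs(1)[OF q_in[OF assms(1)] q_in[OF assms(2)]] dd_q[OF assms(2)] unfolding b_def by simp

end

context tconstr begin

lemma idx_cases:
  assumes "0 < i" "i < N"
  obtains "i \<le> m" | "m < i" "i - Suc m < k"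
  using assms N_eq by (cases "i \<le> m") auto

lemma frac_facts: assumes "0 < i" "i \<le> m" shows "0 < real i / real N" "real i / real N < 1"
proof -
  have "i < N" using assms N_eq by simp
  then show "0 < real i / real N" "real i / real N < 1" using assms N_pos by auto
qed

lemma frac_inj: "real i / real N = real j / real N \<Longrightarrow> i = j"
  using N_pos by (simp add: divide_cancel_right)

lemma frac_mono: "i < j \<Longrightarrow> real i / real N < real j / real N"
  using N_pos by (simp add: divide_strict_right_mono)

lemma d_gt1: "t < k \<Longrightarrow> 1 < d t" using bd_facts[of t] by linarith

lemma fv_0: "fv 0 = 0" unfolding fv_def by simp

lemma fv_low: "0 < i \<Longrightarrow> i \<le> m \<Longrightarrow> fv i = real i / real N"
  unfolding fv_def by simp
lemma fe_low: "i \<le> m \<Longrightarrow> fe i = real i / real N"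
  unfolding fe_def by simp
lemma fv_high: "m < i \<Longrightarrow> fv i = b (i - Suc m)"
  unfolding fv_def by simp
lemma fe_high: "m < i \<Longrightarrow> fe i = d (i - Suc m)"
  unfolding fe_def by simp

lemma fv_lt1: assumes "0 < i" "i \<le> m" shows "fv i < 1" "0 < fv i"
  using fv_low[OF assms] frac_facts[OF assms] by simp_all
lemma fe_lt1: assumes "0 < i" "i \<le> m" shows "fe i < 1" "0 < fe i"
  using fe_low[OF assms(2)] frac_facts[OF assms] by simp_all
lemma fv_ge1: assumes "m < i" "i < N" shows "1 \<le> fv i"
proof -
  have "i - Suc m < k" using assms N_eq by simp
  then show ?thesis using fv_high[OF assms(1)] bd_facts(2)[of "i - Suc m"] by simp
qed
lemma fe_gt1: assumes "m < i" "i < N" shows "1 < fe i"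
proof -
  have "i - Suc m < k" using assms N_eq by simp
  then show ?thesis using fe_high[OF assms(1)] d_gt1[of "i - Suc m"] by simp
qed

lemma fv_pos: assumes "0 < i" "i < N" shows "0 < fv i"
  using assms
proof (cases rule: idx_cases)
  case 1 then show ?thesis using fv_lt1[OF assms(1) 1] by simp
next
  case 2 then show ?thesis using fv_high bd_facts[of "i - Suc m"] by simp
qed

lemma fe_pos: assumes "0 < i" "i < N" shows "0 < fe i"
  using assms
proof (cases rule: idx_cases)
  case 1 then show ?thesis using fe_lt1[OF assms(1) 1] by simp
next
  case 2 then show ?thesis using fe_high d_gt1[of "i - Suc m"] by simp
qed

lemma fv_eq: assumes "i < N" "j < N" "fv i = fv j" shows "i = j"
proof (cases "i = 0 \<or> j = 0")
  case True
  then show ?thesis using fv_pos assms fv_0 by (metis less_irrefl neq0_conv)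
next
  case False
  then have ij: "0 < i" "0 < j" by auto
  show ?thesis
    using ij(1) assms(1)
  proof (cases rule: idx_cases)
    case 1
    note i1 = 1
    show ?thesis using ij(2) assms(2)
    proof (cases rule: idx_cases)
      case 1 then show ?thesis using i1 fv_low ij assms frac_inj by simp
    next
      case 2 then show ?thesis using fv_lt1[OF ij(1) i1] fv_ge1[OF 2(1) assms(2)] assms(3) by simp
    qed
  next
    case 2
    note i2 = 2
    show ?thesis using ij(2) assms(2)
    proof (cases rule: idx_cases)
      case 1 then show ?thesis using fv_lt1[OF ij(2) 1] fv_ge1[OF i2(1) assms(1)] assms(3) by simp
    next
      case 2 then show ?thesis using i2 fv_high assms b_inj[of "i - Suc m" "j - Suc m"] by simp
    qed
  qed
qed

lemma fe_eq: assumes "0 < i" "i < N" "0 < j" "j < N" "fe i = fe j" shows "i = j"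
  using assms(1,2)
proof (cases rule: idx_cases)
  case 1
  note i1 = 1
  show ?thesis using assms(3,4)
  proof (cases rule: idx_cases)
    case 1 then show ?thesis using i1 fe_low assms frac_inj by simp
  next
    case 2 then show ?thesis using fe_lt1[OF assms(1) i1] fe_gt1[OF 2(1) assms(4)] assms(5) by simp
  qed
next
  case 2
  note i2 = 2
  show ?thesis using assms(3,4)
  proof (cases rule: idx_cases)
    case 1 then show ?thesis using fe_lt1[OF assms(3) 1] fe_gt1[OF i2(1) assms(2)] assms(5) by simp
  next
    case 2 then show ?thesis using i2 fe_high assms d_inj[of "i - Suc m" "j - Suc m"] by simp
  qed
qed

lemma fv_fe: assumes "i < N" "0 < j" "j < N" "fv i = fe j" shows "i = j" "i \<le> m"
proof -
  have "i = j \<and> i \<le> m"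
  proof (cases "i = 0")
    case True
    then show ?thesis using fe_pos[OF assms(2,3)] assms(4) fv_0 by simp
  next
    case False
    then have i0: "0 < i" by simp
    show ?thesis
      using i0 assms(1)
    proof (cases rule: idx_cases)
      case 1
      note i1 = 1
      show ?thesis using assms(2,3)
      proof (cases rule: idx_cases)
        case 1 then show ?thesis using i1 fv_low fe_low i0 assms frac_inj by simp
      next
        case 2 then show ?thesis using fv_lt1[OF i0 i1] fe_gt1[OF 2(1) assms(3)] assms(4) by simp
      qed
    next
      case 2
      note i2 = 2
      show ?thesis using assms(2,3)
      proof (cases rule: idx_cases)
        case 1 then show ?thesis using fe_lt1[OF assms(2) 1] fv_ge1[OF i2(1) assms(1)] assms(4) by simp
      next
        case 2 then show ?thesis using i2 fv_high fe_high assms b_ne_d[of "i - Suc m" "j - Suc m"] by simp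
      qed
    qed
  qed
  then show "i = j" "i \<le> m" by auto
qed

lemma fe_par: assumes "0 < i" "i < N" "0 < par i" shows "fe (par i) < fe i"
proof -
  have pi: "par i < i" using par_lt' assms by simp
  have piN: "par i < N" using pi assms by simp
  show ?thesis
    using assms(1,2)
  proof (cases rule: idx_cases)
    case 1
    then show ?thesis using fe_low[of i] fe_low[of "par i"] frac_mono[OF pi] pi by simp
  next
    case 2
    note i2 = 2
    show ?thesis using assms(3) piN
    proof (cases rule: idx_cases)
      case 1 then show ?thesis using fe_lt1[OF assms(3) 1] fe_gt1[OF i2(1) assms(2)] by simp
    next
      case 2 then show ?thesis using i2 fe_high pi d_mono[of "par i - Suc m" "i - Suc m"] by simp
    qed
  qed
qed

lemma fv_le_fe: assumes "0 < i" "i < N" shows "fv i \<le> fe i" "i \<le> m \<Longrightarrow> fv i = fe i"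
  "m < i \<Longrightarrow> fv i < fe i"
proof -
  show "i \<le> m \<Longrightarrow> fv i = fe i" using fv_low fe_low assms by simp
  show "m < i \<Longrightarrow> fv i < fe i" using fv_high fe_high bd_facts(4)[of "i - Suc m"] assms N_eq by simp
  then show "fv i \<le> fe i" using \<open>i \<le> m \<Longrightarrow> fv i = fe i\<close> by fastforce
qed

lemma fv_par_le: assumes "0 < i" "i < N" shows "fv (par i) \<le> fe i"
proof (cases "par i = 0")
  case True
  then show ?thesis using fv_0 fe_pos[OF assms] by simp
next
  case False
  have pi: "par i < i" using par_lt' assms by simp
  have "fv (par i) \<le> fe (par i)" using fv_le_fe(1)[of "par i"] False pi assms by simp
  also have "\<dots> < fe i" using fe_par assms False by simp
  finally show ?thesis by simp
qed

lemma nn_ge: "real N \<le> real nn" using nn_eq N_pos by simp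

lemma fv_bounds: assumes "i < N" shows "0 \<le> fv i" "fv i \<le> real nn"
proof -
  have "0 \<le> fv i \<and> fv i \<le> real nn"
  proof (cases "i = 0")
    case True then show ?thesis using fv_0 by simp
  next
    case False
    then have i0: "0 < i" by simp
    show ?thesis using i0 assms
    proof (cases rule: idx_cases)
      case 1 then show ?thesis using fv_lt1[OF i0 1] nn_ge N_pos by simp
    next
      case 2 then show ?thesis using fv_high bd_facts[of "i - Suc m"] by simp
    qed
  qed
  then show "0 \<le> fv i" "fv i \<le> real nn" by auto
qed

lemma fe_bounds: assumes "0 < i" "i < N" shows "0 \<le> fe i" "fe i \<le> real nn"
proof -
  have "0 \<le> fe i \<and> fe i \<le> real nn"
    using assms
  proof (cases rule: idx_cases)
    case 1 then show ?thesis using fe_lt1[OF assms(1) 1] nn_ge N_pos by simp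
  next
    case 2 then show ?thesis using fe_high bd_facts[of "i - Suc m"] by simp
  qed
  then show "0 \<le> fe i" "fe i \<le> real nn" by auto
qed

lemma F_vert: "i < N \<Longrightarrow> F {vs ! i} = fv i"
  unfolding F_def by (simp add: idx_nth)

lemma F_edge: assumes "0 < i" "i < N" shows "F (ed i) = fe i"
proof -
  have pi: "par i < i" using par_lt' assms by simp
  have "card (ed i) \<noteq> 1" using card_ed assms by simp
  moreover have "idx ` ed i = {par i, i}" unfolding ed_def using idx_nth pi assms by simp
  moreover have "Max {par i, i} = i" using pi by simp
  ultimately show ?thesis unfolding F_def by simp
qed

lemma S_cases:
  assumes "\<sigma> \<in> simplices V E"
  obtains i where "i < N" "\<sigma> = {vs ! i}" | i where "0 < i" "i < N" "\<sigma> = ed i"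
  using assms unfolding simplices_eq by auto

lemma vert_in_S: "i < N \<Longrightarrow> {vs ! i} \<in> simplices V E"
  unfolding simplices_eq by auto
lemma ed_in_S: "0 < i \<Longrightarrow> i < N \<Longrightarrow> ed i \<in> simplices V E"
  unfolding simplices_eq by auto

lemma F_same:
  assumes "\<sigma> \<in> simplices V E" "\<tau> \<in> simplices V E" "F \<sigma> = F \<tau>" "\<sigma> \<noteq> \<tau>"
  shows "\<exists>i. 0 < i \<and> i \<le> m \<and> i < N \<and> ((\<sigma> = {vs ! i} \<and> \<tau> = ed i) \<or> (\<sigma> = ed i \<and> \<tau> = {vs ! i}))"
  using assms(1)
proof (cases rule: S_cases)
  case (1 i)
  note s = 1
  show ?thesis using assms(2)
  proof (cases rule: S_cases)
    case (1 j)
    then show ?thesis using s assms F_vert fv_eq by auto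
  next
    case (2 j)
    then have "i = j" "i \<le> m" using s assms F_vert F_edge fv_fe[of i j] by auto
    then show ?thesis using s 2 by auto
  qed
next
  case (2 i)
  note s = 2
  show ?thesis using assms(2)
  proof (cases rule: S_cases)
    case (1 j)
    then have "j = i" "j \<le> m" using s assms F_vert F_edge fv_fe[of j i] by auto
    then show ?thesis using s 1 by auto
  next
    case (2 j)
    then show ?thesis using s assms F_edge fe_eq by auto
  qed
qed

lemma vert_sub_ed: "0 < i \<Longrightarrow> i < N \<Longrightarrow> {vs ! i} \<subset> ed i"
  unfolding ed_def using ed_ne by auto

lemma F_class:
  assumes "\<sigma> \<in> simplices V E"
  shows "\<exists>i. {\<tau> \<in> simplices V E. F \<tau> = F \<sigma>} \<subseteq> {{vs ! i}, ed i}"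
  using assms
proof (cases rule: S_cases)
  case (1 i)
  have "\<tau> \<in> {{vs ! i}, ed i}" if tt: "\<tau> \<in> simplices V E" "F \<tau> = F \<sigma>" for \<tau>
  proof (cases "\<tau> = \<sigma>")
    case True then show ?thesis using 1 by simp
  next
    case False
    then have ne: "\<sigma> \<noteq> \<tau>" by auto
    obtain j where j: "0 < j" "j < N" "(\<sigma> = {vs ! j} \<and> \<tau> = ed j) \<or> (\<sigma> = ed j \<and> \<tau> = {vs ! j})"
      using F_same[OF assms tt(1) tt(2)[symmetric] ne] by blast
    have "card (ed j) = 2" using card_ed j by simp
    moreover have "card \<sigma> = 1" using 1 by simp
    ultimately have "\<sigma> \<noteq> ed j" by auto
    then have "\<sigma> = {vs ! j} \<and> \<tau> = ed j" using j by blast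
    then have "j = i" using 1 vs_nth_eq j by auto
    then show ?thesis using \<open>\<sigma> = {vs ! j} \<and> \<tau> = ed j\<close> by simp
  qed
  then show ?thesis by blast
next
  case (2 i)
  have "\<tau> \<in> {{vs ! i}, ed i}" if tt: "\<tau> \<in> simplices V E" "F \<tau> = F \<sigma>" for \<tau>
  proof (cases "\<tau> = \<sigma>")
    case True then show ?thesis using 2 by simp
  next
    case False
    then have ne: "\<sigma> \<noteq> \<tau>" by auto
    obtain j where j: "0 < j" "j < N" "(\<sigma> = {vs ! j} \<and> \<tau> = ed j) \<or> (\<sigma> = ed j \<and> \<tau> = {vs ! j})"
      using F_same[OF assms tt(1) tt(2)[symmetric] ne] by blast
    have "card (ed i) = 2" using card_ed 2 by simp
    then have "card \<sigma> = 2" using 2 by simp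
    then have "\<sigma> \<noteq> {vs ! j}" by auto
    then have "\<sigma> = ed j \<and> \<tau> = {vs ! j}" using j by blast
    then have "ed j = ed i" using 2 by simp
    then have "j = i" using inj_onD[OF ed_inj] j 2 by simp
    then show ?thesis using \<open>\<sigma> = ed j \<and> \<tau> = {vs ! j}\<close> by simp
  qed
  then show ?thesis by blast
qed

lemma unique_iff:
  assumes "\<sigma> \<in> simplices V E"
  shows "(\<forall>\<tau>\<in>simplices V E. F \<tau> = F \<sigma> \<longrightarrow> \<tau> = \<sigma>) \<longleftrightarrow>
    \<not> (\<exists>i. 0 < i \<and> i \<le> m \<and> (\<sigma> = {vs ! i} \<or> \<sigma> = ed i))"
proof
  assume u: "\<forall>\<tau>\<in>simplices V E. F \<tau> = F \<sigma> \<longrightarrow> \<tau> = \<sigma>"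
  show "\<not> (\<exists>i. 0 < i \<and> i \<le> m \<and> (\<sigma> = {vs ! i} \<or> \<sigma> = ed i))"
  proof
    assume "\<exists>i. 0 < i \<and> i \<le> m \<and> (\<sigma> = {vs ! i} \<or> \<sigma> = ed i)"
    then obtain i where i: "0 < i" "i \<le> m" "\<sigma> = {vs ! i} \<or> \<sigma> = ed i" by blast
    have iN: "i < N" using i N_eq by simp
    have eq: "F {vs ! i} = F (ed i)" using F_vert F_edge fv_le_fe(2) i iN by simp
    have ne: "{vs ! i} \<noteq> ed i" using vert_sub_ed i iN by blast
    show False using i(3)
    proof
      assume si: "\<sigma> = {vs ! i}"
      have "F (ed i) = F \<sigma> \<longrightarrow> ed i = \<sigma>" using bspec[OF u ed_in_S[OF i(1) iN]] .
      then have "ed i = {vs ! i}" using eq si by simp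
      then show False using ne by simp
    next
      assume si: "\<sigma> = ed i"
      have "F {vs ! i} = F \<sigma> \<longrightarrow> {vs ! i} = \<sigma>" using bspec[OF u vert_in_S[OF iN]] .
      then have "{vs ! i} = ed i" using eq si by simp
      then show False using ne by simp
    qed
  qed
next
  assume n: "\<not> (\<exists>i. 0 < i \<and> i \<le> m \<and> (\<sigma> = {vs ! i} \<or> \<sigma> = ed i))"
  show "\<forall>\<tau>\<in>simplices V E. F \<tau> = F \<sigma> \<longrightarrow> \<tau> = \<sigma>"
  proof (intro ballI impI)
    fix \<tau> assume t: "\<tau> \<in> simplices V E" "F \<tau> = F \<sigma>"
    show "\<tau> = \<sigma>"
    proof (rule ccontr)
      assume "\<tau> \<noteq> \<sigma>"
      then have ne: "\<sigma> \<noteq> \<tau>" by simp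
      obtain i where "0 < i" "i \<le> m" "(\<sigma> = {vs ! i} \<and> \<tau> = ed i) \<or> (\<sigma> = ed i \<and> \<tau> = {vs ! i})"
        using F_same[OF assms t(1) t(2)[symmetric] ne] by blast
      then show False using n by blast
    qed
  qed
qed

lemma m1: "\<forall>\<sigma>\<in>simplices V E. 0 \<le> F \<sigma> \<and> F \<sigma> \<le> real nn"
proof
  fix \<sigma> assume "\<sigma> \<in> simplices V E"
  then show "0 \<le> F \<sigma> \<and> F \<sigma> \<le> real nn"
  proof (cases rule: S_cases)
    case (1 i) then show ?thesis using F_vert[OF 1(1)] fv_bounds[OF 1(1)] by simp
  next
    case (2 i) then show ?thesis using F_edge[OF 2(1,2)] fe_bounds[OF 2(1,2)] by simp
  qed
qed

lemma m2: "\<forall>v\<in>V. \<forall>e\<in>E. v \<in> e \<longrightarrow> F {v} \<le> F e"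
proof (intro ballI impI)
  fix v e assume v: "v \<in> V" and e: "e \<in> E" and ve: "v \<in> e"
  obtain i where i: "0 < i" "i < N" "e = ed i" using e unfolding E_ed by auto
  have pi: "par i < N" using par_lt'[OF i(1,2)] i(2) by simp
  have Fe: "F e = fe i" using F_edge[OF i(1,2)] i(3) by simp
  have "v = vs ! (par i) \<or> v = vs ! i" using ve i(3) unfolding ed_def by auto
  then show "F {v} \<le> F e"
  proof
    assume "v = vs ! (par i)"
    then show ?thesis using F_vert[OF pi] Fe fv_par_le[OF i(1,2)] by simp
  next
    assume "v = vs ! i"
    then show ?thesis using F_vert[OF i(2)] Fe fv_le_fe(1)[OF i(1,2)] by simp
  qed
qed

lemma m3: "\<exists>\<sigma>\<in>simplices V E. F \<sigma> = 0"
proof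
  show "{vs ! 0} \<in> simplices V E" using vert_in_S[OF N_pos] .
  show "F {vs ! 0} = 0" using F_vert[OF N_pos] fv_0 by simp
qed

lemma m4: "\<forall>x. card {\<sigma>\<in>simplices V E. F \<sigma> = x} \<le> 2"
proof
  fix x
  show "card {\<sigma>\<in>simplices V E. F \<sigma> = x} \<le> 2"
  proof (cases "{\<sigma>\<in>simplices V E. F \<sigma> = x} = {}")
    case True then show ?thesis by (simp add: True)
  next
    case False
    then obtain \<sigma> where s: "\<sigma> \<in> simplices V E" "F \<sigma> = x" by blast
    obtain i where i: "{\<tau> \<in> simplices V E. F \<tau> = F \<sigma>} \<subseteq> {{vs ! i}, ed i}" using F_class[OF s(1)] by blast
    have "card {\<sigma>\<in>simplices V E. F \<sigma> = x} \<le> card {{vs ! i}, ed i}"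
      by (rule card_mono) (use i s(2) in auto)
    also have "\<dots> \<le> 2" by (simp add: card_insert_le_m1)
    finally show ?thesis .
  qed
qed

lemma m5: "\<forall>\<sigma>\<in>simplices V E. \<forall>\<tau>\<in>simplices V E. \<sigma> \<noteq> \<tau> \<and> F \<sigma> = F \<tau> \<longrightarrow> \<sigma> \<subset> \<tau> \<or> \<tau> \<subset> \<sigma>"
proof (intro ballI impI)
  fix \<sigma> \<tau> assume st: "\<sigma> \<in> simplices V E" "\<tau> \<in> simplices V E" and c: "\<sigma> \<noteq> \<tau> \<and> F \<sigma> = F \<tau>"
  obtain i where i: "0 < i" "i < N" "(\<sigma> = {vs ! i} \<and> \<tau> = ed i) \<or> (\<sigma> = ed i \<and> \<tau> = {vs ! i})"
    using F_same[OF st conjunct2[OF c] conjunct1[OF c]] by blast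
  have "{vs ! i} \<subset> ed i" using vert_sub_ed[OF i(1,2)] .
  then show "\<sigma> \<subset> \<tau> \<or> \<tau> \<subset> \<sigma>" using i(3) by blast
qed

lemma intnat: "(x::real) \<in> \<int> \<Longrightarrow> 0 \<le> x \<Longrightarrow> x \<in> \<nat>"
proof -
  assume "x \<in> \<int>" "0 \<le> x"
  then obtain n :: nat where "x = real n" using int_nat_real by blast
  then show "x \<in> \<nat>" by simp
qed

lemma m6: "\<forall>\<sigma>\<in>simplices V E. (\<forall>\<tau>\<in>simplices V E. F \<tau> = F \<sigma> \<longrightarrow> \<tau> = \<sigma>) \<longrightarrow> F \<sigma> \<in> \<nat>"
proof (intro ballI impI)
  fix \<sigma> assume s: "\<sigma> \<in> simplices V E" and u: "\<forall>\<tau>\<in>simplices V E. F \<tau> = F \<sigma> \<longrightarrow> \<tau> = \<sigma>"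
  have nb: "\<not> (\<exists>i. 0 < i \<and> i \<le> m \<and> (\<sigma> = {vs ! i} \<or> \<sigma> = ed i))" using unique_iff[OF s] u by blast
  show "F \<sigma> \<in> \<nat>" using s
  proof (cases rule: S_cases)
    case (1 i)
    show ?thesis
    proof (cases "i = 0")
      case True then show ?thesis using 1 F_vert fv_0 by simp
    next
      case False
      have mi: "m < i"
      proof (rule ccontr)
        assume "\<not> m < i"
        then have "0 < i \<and> i \<le> m \<and> (\<sigma> = {vs ! i} \<or> \<sigma> = ed i)" using False 1 by simp
        then show False using nb by blast
      qed
      have t: "i - Suc m < k" using 1 mi N_eq by simp
      have "F \<sigma> = b (i - Suc m)" using 1 F_vert[OF 1(1)] fv_high[OF mi] by simp
      then show ?thesis using bd_facts(1,2)[OF t] intnat by simp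
    qed
  next
    case (2 i)
    have mi: "m < i"
    proof (rule ccontr)
      assume "\<not> m < i"
      then have "0 < i \<and> i \<le> m \<and> (\<sigma> = {vs ! i} \<or> \<sigma> = ed i)" using 2 by simp
      then show False using nb by blast
    qed
    have t: "i - Suc m < k" using 2 mi N_eq by simp
    have "F \<sigma> = d (i - Suc m)" using 2 F_edge[OF 2(1,2)] fe_high[OF mi] by simp
    then show ?thesis using bd_facts(2,3,4)[OF t] intnat by simp
  qed
qed

lemma morse: "discrete_morse V E F"
proof -
  have n: "card (simplices V E) = nn" unfolding nn_def ..
  show ?thesis unfolding discrete_morse_def Let_def n
    using m1 m2 m3 m4 m5 m6 by (intro conjI)
qed

end

lemma rep_sum: "finite A \<Longrightarrow> replicate_mset (card A) y = (\<Sum>x\<in>A. {#y#})"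
  by (induction A rule: finite_induct) auto

lemma rep_sum_bool:
  assumes "finite A"
  shows "replicate_mset (nat (\<Sum>x\<in>A. of_bool (P x) :: int)) y = (\<Sum>x\<in>A. if P x then {#y#} else {#})"
proof -
  have "(\<Sum>x\<in>A. of_bool (P x) :: int) = int (card (A \<inter> {x. P x}))" using assms by simp
  then have "nat (\<Sum>x\<in>A. of_bool (P x) :: int) = card (A \<inter> {x. P x})" by simp
  moreover have "(\<Sum>x\<in>A. if P x then {#y#} else {#}) = (\<Sum>x\<in>A \<inter> {x. P x}. {#y#})"
    using assms by (simp add: sum.inter_filter Int_def)
  ultimately show ?thesis using rep_sum[of "A \<inter> {x. P x}" y] assms by simp
qed

lemma diagram_calc:
  fixes cs :: "real list" and Ks :: "'a set set list" and b d :: "nat \<Rightarrow> real" and k :: nat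
  assumes sw: "sorted_wrt (<) cs" and len: "length Ks = length cs" and ne: "cs \<noteq> []"
    and bin: "\<And>u. u < k \<Longrightarrow> b u \<in> set cs" and din: "\<And>u. u < k \<Longrightarrow> d u \<in> set cs"
    and bpos: "\<And>u. u < k \<Longrightarrow> cs ! 0 < b u" and bd: "\<And>u. u < k \<Longrightarrow> b u < d u"
    and rank: "\<And>i j. i \<le> j \<Longrightarrow> j < length cs \<Longrightarrow>
       pbetti Ks i j = 1 + (\<Sum>u<k. of_bool (b u \<le> cs ! i) * of_bool (cs ! j < d u))"
  shows "pers_diagram Ks cs = (\<Sum>u<k. {#(b u, ereal (d u))#}) + {#(cs ! 0, PInfty)#}"
proof -
  define M where "M = length cs"
  have M0: "0 < M" using ne unfolding M_def by simp
  have lt_iff: "cs ! i < cs ! j \<longleftrightarrow> i < j" if "i < M" "j < M" for i j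
  proof
    assume "i < j" then show "cs ! i < cs ! j" using sw that unfolding M_def by (simp add: sorted_wrt_nth_less)
  next
    assume a: "cs ! i < cs ! j"
    show "i < j"
    proof (rule ccontr)
      assume "\<not> i < j"
      then have "j < i \<or> j = i" by auto
      then show False
        using a sw that unfolding M_def by (metis less_asym less_irrefl sorted_wrt_nth_less)
    qed
  qed
  have le_iff: "cs ! i \<le> cs ! j \<longleftrightarrow> i \<le> j" if "i < M" "j < M" for i j
    using lt_iff[OF that(2,1)] by (simp add: not_less[symmetric])
  have eq_iff: "cs ! i = cs ! j \<longleftrightarrow> i = j" if "i < M" "j < M" for i j
    using le_iff[OF that] le_iff[OF that(2,1)] by auto
  have memE: "\<exists>l<M. x = cs ! l" if "x \<in> set cs" for x
    using that unfolding M_def by (auto simp: in_set_conv_nth)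
  have adiff: "(of_bool (x \<le> cs ! i) :: int) - of_bool (x \<le> cs ! (i - 1)) = of_bool (x = cs ! i)"
    if xs: "x \<in> set cs" "0 < i" "i < M" for x i
  proof -
    obtain l where l: "l < M" "x = cs ! l" using memE xs(1) by blast
    have i1: "i - 1 < M" using that by simp
    have "x \<le> cs ! i \<longleftrightarrow> l \<le> i" using le_iff l that by simp
    moreover have "x \<le> cs ! (i - 1) \<longleftrightarrow> l \<le> i - 1" using le_iff l i1 by simp
    moreover have "x = cs ! i \<longleftrightarrow> l = i" using eq_iff l that by simp
    ultimately show ?thesis using that by auto
  qed
  have bdiff: "(of_bool (cs ! (j - 1) < y) :: int) - of_bool (cs ! j < y) = of_bool (y = cs ! j)"
    if ys: "y \<in> set cs" "0 < j" "j < M" for y j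
  proof -
    obtain l where l: "l < M" "y = cs ! l" using memE ys(1) by blast
    have j1: "j - 1 < M" using that by simp
    have "cs ! j < y \<longleftrightarrow> j < l" using lt_iff l that by simp
    moreover have "cs ! (j - 1) < y \<longleftrightarrow> j - 1 < l" using lt_iff l j1 by simp
    moreover have "y = cs ! j \<longleftrightarrow> l = j" using eq_iff l that by simp
    ultimately show ?thesis using that by auto
  qed
  define G where "G i j = (\<Sum>u<k. (of_bool (b u \<le> cs ! i) :: int) * of_bool (cs ! j < d u))" for i j
  have pb: "pbetti Ks i j = 1 + G i j" if "i \<le> j" "j < M" for i j
    using rank that unfolding G_def M_def by simp
  have G0: "G 0 j = 0" for j
    unfolding G_def using bpos by (intro sum.neutral) (auto simp: not_le)
  have Glast: "G i (M - 1) = 0" for i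
  proof -
    have "\<not> cs ! (M - 1) < d u" if uk: "u < k" for u
    proof -
      obtain l where l: "l < M" "d u = cs ! l" using memE din uk by blast
      then show ?thesis using le_iff[OF l(1), of "M - 1"] M0 by (simp add: not_less)
    qed
    then show ?thesis unfolding G_def by (intro sum.neutral) auto
  qed
  have T: "pbetti Ks i (j - 1) - pbetti Ks i j - pbetti_before Ks i (j - 1) + pbetti_before Ks i j
      = (\<Sum>u<k. of_bool (b u = cs ! i \<and> d u = cs ! j))" if ij: "i < j" "j < M" for i j
  proof (cases "i = 0")
    case True
    have "(\<Sum>u<k. of_bool (b u = cs ! i \<and> d u = cs ! j) :: int) = 0"
      using bpos True by (intro sum.neutral) fastforce
    moreover have "pbetti Ks i (j - 1) - pbetti Ks i j = 0"
      using pb[of i "j - 1"] pb[of i j] ij True G0 by simp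
    ultimately show ?thesis unfolding pbetti_before_def using True by simp
  next
    case False
    have e1: "pbetti_before Ks i (j - 1) = 1 + G (i - 1) (j - 1)"
      unfolding pbetti_before_def using False pb[of "i - 1" "j - 1"] ij by simp
    have e2: "pbetti_before Ks i j = 1 + G (i - 1) j"
      unfolding pbetti_before_def using False pb[of "i - 1" j] ij by simp
    have "pbetti Ks i (j - 1) - pbetti Ks i j - pbetti_before Ks i (j - 1) + pbetti_before Ks i j
        = G i (j - 1) - G i j - G (i - 1) (j - 1) + G (i - 1) j"
      using e1 e2 pb[of i "j - 1"] pb[of i j] ij by simp
    also have "\<dots> = (\<Sum>u<k. (of_bool (b u \<le> cs ! i) :: int) * of_bool (cs ! (j - 1) < d u)
          - (of_bool (b u \<le> cs ! i) :: int) * of_bool (cs ! j < d u)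
          - (of_bool (b u \<le> cs ! (i - 1)) :: int) * of_bool (cs ! (j - 1) < d u)
          + (of_bool (b u \<le> cs ! (i - 1)) :: int) * of_bool (cs ! j < d u))"
      unfolding G_def by (simp only: sum.distrib sum_subtractf)
    also have "\<dots> = (\<Sum>u<k. ((of_bool (b u \<le> cs ! i) :: int) - of_bool (b u \<le> cs ! (i - 1))) *
                           ((of_bool (cs ! (j - 1) < d u) :: int) - of_bool (cs ! j < d u)))"
      by (intro sum.cong refl) (simp only: algebra_simps)
    also have "\<dots> = (\<Sum>u<k. of_bool (b u = cs ! i \<and> d u = cs ! j))"
    proof (intro sum.cong refl)
      fix u assume "u \<in> {..<k}"
      then have u: "u < k" by simp
      have "j > 0" using ij by simp
      then show "((of_bool (b u \<le> cs ! i) :: int) - of_bool (b u \<le> cs ! (i - 1))) *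
                 ((of_bool (cs ! (j - 1) < d u) :: int) - of_bool (cs ! j < d u))
               = of_bool (b u = cs ! i \<and> d u = cs ! j)"
        using adiff[OF bin[OF u], of i] bdiff[OF din[OF u], of j] False ij by simp
    qed
    finally show ?thesis .
  qed
  define iu where "iu u = the_inv_into {..<M} ((!) cs) (b u)" for u
  define ju where "ju u = the_inv_into {..<M} ((!) cs) (d u)" for u
  have injcs: "inj_on ((!) cs) {..<M}" using eq_iff by (auto intro!: inj_onI)
  have imcs: "(!) cs ` {..<M} = set cs" unfolding M_def by (auto simp: in_set_conv_nth)
  have iu: "iu u < M" "cs ! (iu u) = b u" if "u < k" for u
  proof -
    have m: "b u \<in> (!) cs ` {..<M}" using bin[OF that] imcs by simp
    show "iu u < M" using the_inv_into_into[OF injcs m subset_refl] unfolding iu_def by simp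
    show "cs ! (iu u) = b u" using f_the_inv_into_f[OF injcs m] unfolding iu_def by simp
  qed
  have ju: "ju u < M" "cs ! (ju u) = d u" if "u < k" for u
  proof -
    have m: "d u \<in> (!) cs ` {..<M}" using din[OF that] imcs by simp
    show "ju u < M" using the_inv_into_into[OF injcs m subset_refl] unfolding ju_def by simp
    show "cs ! (ju u) = d u" using f_the_inv_into_f[OF injcs m] unfolding ju_def by simp
  qed
  have iju: "iu u < ju u" if "u < k" for u
    using lt_iff[OF iu(1)[OF that] ju(1)[OF that]] iu(2)[OF that] ju(2)[OF that] bd[OF that] by simp
  have part1: "(\<Sum>i<M. \<Sum>j\<in>{i<..<M}.
          replicate_mset (nat (pbetti Ks i (j - 1) - pbetti Ks i j
                               - pbetti_before Ks i (j - 1) + pbetti_before Ks i j))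
            (cs ! i, ereal (cs ! j))) = (\<Sum>u<k. {#(b u, ereal (d u))#})"
  proof -
    have "(\<Sum>i<M. \<Sum>j\<in>{i<..<M}.
          replicate_mset (nat (pbetti Ks i (j - 1) - pbetti Ks i j
                               - pbetti_before Ks i (j - 1) + pbetti_before Ks i j))
            (cs ! i, ereal (cs ! j)))
        = (\<Sum>i<M. \<Sum>j\<in>{i<..<M}. \<Sum>u<k.
             if i = iu u then (if j = ju u then {#(b u, ereal (d u))#} else {#}) else {#})"
    proof (intro sum.cong refl)
      fix i j assume i: "i \<in> {..<M}" and j: "j \<in> {i<..<M}"
      have "replicate_mset (nat (pbetti Ks i (j - 1) - pbetti Ks i j
                               - pbetti_before Ks i (j - 1) + pbetti_before Ks i j))
            (cs ! i, ereal (cs ! j))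
          = (\<Sum>u<k. if b u = cs ! i \<and> d u = cs ! j then {#(cs ! i, ereal (cs ! j))#} else {#})"
        using T[of i j] i j rep_sum_bool[of "{..<k}" "\<lambda>u. b u = cs ! i \<and> d u = cs ! j"] by simp
      also have "\<dots> = (\<Sum>u<k. if i = iu u then (if j = ju u then {#(b u, ereal (d u))#} else {#}) else {#})"
      proof (intro sum.cong refl)
        fix u assume "u \<in> {..<k}"
        then have u: "u < k" by simp
        have "b u = cs ! i \<longleftrightarrow> i = iu u" using iu[OF u] eq_iff[of i "iu u"] i by auto
        moreover have "d u = cs ! j \<longleftrightarrow> j = ju u" using ju[OF u] eq_iff[of j "ju u"] j by auto
        ultimately show "(if b u = cs ! i \<and> d u = cs ! j then {#(cs ! i, ereal (cs ! j))#} else {#})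
            = (if i = iu u then (if j = ju u then {#(b u, ereal (d u))#} else {#}) else {#})"
          by auto
      qed
      finally show "replicate_mset (nat (pbetti Ks i (j - 1) - pbetti Ks i j
                               - pbetti_before Ks i (j - 1) + pbetti_before Ks i j))
            (cs ! i, ereal (cs ! j))
          = (\<Sum>u<k. if i = iu u then (if j = ju u then {#(b u, ereal (d u))#} else {#}) else {#})" .
    qed
    also have "\<dots> = (\<Sum>i<M. \<Sum>u<k. \<Sum>j\<in>{i<..<M}.
             if i = iu u then (if j = ju u then {#(b u, ereal (d u))#} else {#}) else {#})"
      by (intro sum.cong refl sum.swap)
    also have "\<dots> = (\<Sum>u<k. \<Sum>i<M. \<Sum>j\<in>{i<..<M}.
             if i = iu u then (if j = ju u then {#(b u, ereal (d u))#} else {#}) else {#})"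
      by (rule sum.swap)
    also have "\<dots> = (\<Sum>u<k. {#(b u, ereal (d u))#})"
    proof (intro sum.cong refl)
      fix u assume "u \<in> {..<k}"
      then have u: "u < k" by simp
      have "(\<Sum>i<M. \<Sum>j\<in>{i<..<M}.
             if i = iu u then (if j = ju u then {#(b u, ereal (d u))#} else {#}) else {#})
          = (\<Sum>i<M. if i = iu u then (\<Sum>j\<in>{i<..<M}. if j = ju u then {#(b u, ereal (d u))#} else {#}) else {#})"
        by (intro sum.cong refl) auto
      also have "\<dots> = (\<Sum>j\<in>{iu u<..<M}. if j = ju u then {#(b u, ereal (d u))#} else {#})"
        using iu[OF u] by simp
      also have "\<dots> = {#(b u, ereal (d u))#}"
        using ju[OF u] iju[OF u] by simp
      finally show "(\<Sum>i<M. \<Sum>j\<in>{i<..<M}.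
             if i = iu u then (if j = ju u then {#(b u, ereal (d u))#} else {#}) else {#})
          = {#(b u, ereal (d u))#}" .
    qed
    finally show ?thesis .
  qed
  have part2: "(\<Sum>i<M. replicate_mset (nat (pbetti Ks i (M - 1) - pbetti_before Ks i (M - 1)))
            (cs ! i, PInfty)) = {#(cs ! 0, PInfty)#}"
  proof -
    have "(\<Sum>i<M. replicate_mset (nat (pbetti Ks i (M - 1) - pbetti_before Ks i (M - 1)))
            (cs ! i, PInfty)) = (\<Sum>i<M. if i = 0 then {#(cs ! 0, PInfty)#} else {#})"
    proof (intro sum.cong refl)
      fix i assume "i \<in> {..<M}"
      then have i: "i < M" by simp
      show "replicate_mset (nat (pbetti Ks i (M - 1) - pbetti_before Ks i (M - 1))) (cs ! i, PInfty)
          = (if i = 0 then {#(cs ! 0, PInfty)#} else {#})"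
      proof (cases "i = 0")
        case True
        then show ?thesis using pb[of 0 "M - 1"] M0 G0 unfolding pbetti_before_def by simp
      next
        case False
        then show ?thesis using pb[of i "M - 1"] pb[of "i - 1" "M - 1"] i Glast
          unfolding pbetti_before_def by simp
      qed
    qed
    also have "\<dots> = {#(cs ! 0, PInfty)#}" using M0 by simp
    finally show ?thesis .
  qed
  show ?thesis unfolding pers_diagram_def Let_def len M_def[symmetric] part1 part2 ..
qed

lemma creach_closed:
  assumes "creach K x y" "x \<in> A" "\<And>u v. u \<in> A \<Longrightarrow> u \<noteq> v \<Longrightarrow> {u, v} \<in> K \<Longrightarrow> v \<in> A"
  shows "y \<in> A"
  using assms(1)[unfolded creach_def] assms(2)
  by (induction rule: rtranclp_induct) (use assms(3) in blast)+

lemma creach_step: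
  assumes "creach K x y" "y \<noteq> z" "{y, z} \<in> K" shows "creach K x z"
  using assms unfolding creach_def by (simp add: rtranclp.rtrancl_into_rtrancl)

lemma creach_step':
  assumes "creach K y x" "y \<noteq> z" "{y, z} \<in> K" shows "creach K z x"
proof -
  have "{z, y} \<in> K" "z \<noteq> y" using assms by (auto simp: insert_commute)
  then show ?thesis using assms(1) unfolding creach_def by (simp add: converse_rtranclp_into_rtranclp)
qed

lemma creach_trans: "creach K x y \<Longrightarrow> creach K y z \<Longrightarrow> creach K x z"
  unfolding creach_def by simp

lemma mset_set_sum: "finite A \<Longrightarrow> image_mset f (mset_set A) = (\<Sum>x\<in>A. {#f x#})"
  by (induction A rule: finite_induct) auto

context tconstr begin

definition "lev t = level (simplices V E) F t"
definition "R t = {vs ! i | i. i < N \<and> (i = 0 \<or> fe i \<le> t)}"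

lemma vert_lev: "i < N \<Longrightarrow> {vs ! i} \<in> lev t \<longleftrightarrow> fv i \<le> t"
  unfolding lev_def level_def using vert_in_S F_vert by simp

lemma ed_lev: "0 < i \<Longrightarrow> i < N \<Longrightarrow> ed i \<in> lev t \<longleftrightarrow> fe i \<le> t"
  unfolding lev_def level_def using ed_in_S F_edge by simp

lemma cverts_lev: "cverts (lev t) = {vs ! i | i. i < N \<and> fv i \<le> t}"
proof (intro equalityI subsetI)
  fix x assume "x \<in> cverts (lev t)"
  then have x: "{x} \<in> lev t" unfolding cverts_def by simp
  then have "{x} \<in> simplices V E" unfolding lev_def level_def by simp
  then show "x \<in> {vs ! i | i. i < N \<and> fv i \<le> t}"
  proof (cases rule: S_cases)
    case (1 i)
    then show ?thesis using x vert_lev by auto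
  next
    case (2 i)
    then have "card {x} = 2" using card_ed by simp
    then show ?thesis by simp
  qed
next
  fix x assume "x \<in> {vs ! i | i. i < N \<and> fv i \<le> t}"
  then show "x \<in> cverts (lev t)" unfolding cverts_def using vert_lev by auto
qed

lemma edge_lev:
  assumes "x \<noteq> y" "{x, y} \<in> lev t"
  shows "\<exists>j. 0 < j \<and> j < N \<and> {x, y} = ed j \<and> fe j \<le> t"
proof -
  have "{x, y} \<in> simplices V E" using assms unfolding lev_def level_def by simp
  then show ?thesis
  proof (cases rule: S_cases)
    case (1 i)
    then have "{x, y} \<subseteq> {vs ! i}" by simp
    then have "x = vs ! i" "y = vs ! i" by auto
    then show ?thesis using assms(1) by simp
  next
    case (2 i)
    then show ?thesis using assms ed_lev by auto
  qed
qed

lemma ed_ends_R: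
  assumes "0 < j" "j < N" "fe j \<le> t"
  shows "vs ! j \<in> R t" "vs ! (par j) \<in> R t"
proof -
  show "vs ! j \<in> R t" unfolding R_def using assms by auto
  have pj: "par j < j" using par_lt' assms by simp
  show "vs ! (par j) \<in> R t"
  proof (cases "par j = 0")
    case True then show ?thesis unfolding R_def using N_pos by auto
  next
    case False
    then have "fe (par j) < fe j" using fe_par assms by simp
    then show ?thesis unfolding R_def using pj assms by force
  qed
qed

lemma R_reach:
  assumes "i < N" "i = 0 \<or> fe i \<le> t"
  shows "creach (lev t) (vs ! 0) (vs ! i) \<and> creach (lev t) (vs ! i) (vs ! 0)"
  using assms
proof (induction i rule: less_induct)
  case (less i)
  show ?case
  proof (cases "i = 0")
    case True then show ?thesis unfolding creach_def by simp
  next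
    case False
    then have fe: "fe i \<le> t" using less.prems by simp
    have pi: "par i < i" using par_lt' False less.prems by simp
    have pR: "par i = 0 \<or> fe (par i) \<le> t"
      using fe_par[of i] False less.prems fe by force
    have IH: "creach (lev t) (vs ! 0) (vs ! par i) \<and> creach (lev t) (vs ! par i) (vs ! 0)"
      using less.IH[OF pi] pi less.prems pR by simp
    have e: "{vs ! par i, vs ! i} \<in> lev t" using ed_lev[of i t] False less.prems fe unfolding ed_def by simp
    have ne: "vs ! par i \<noteq> vs ! i" using ed_ne False less.prems by simp
    show ?thesis using creach_step[OF _ ne e] creach_step'[OF _ ne e] IH by blast
  qed
qed

lemma ccomp_R:
  assumes "i < N" "i = 0 \<or> fe i \<le> t"
  shows "ccomp (lev t) (vs ! i) = R t"
proof (intro equalityI subsetI)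
  fix w assume "w \<in> ccomp (lev t) (vs ! i)"
  then have "creach (lev t) (vs ! i) w" unfolding ccomp_def by simp
  moreover have "vs ! i \<in> R t" unfolding R_def using assms by auto
  ultimately show "w \<in> R t"
  proof (rule creach_closed)
    fix u v assume "u \<in> R t" "u \<noteq> v" "{u, v} \<in> lev t"
    then obtain j where j: "0 < j" "j < N" "{u, v} = ed j" "fe j \<le> t" using edge_lev by blast
    have "v = vs ! j \<or> v = vs ! par j" using j(3) unfolding ed_def by (auto simp: doubleton_eq_iff)
    then show "v \<in> R t" using ed_ends_R[OF j(1,2,4)] by auto
  qed
next
  fix w assume "w \<in> R t"
  then obtain j where j: "w = vs ! j" "j < N" "j = 0 \<or> fe j \<le> t" unfolding R_def by auto
  have "creach (lev t) (vs ! i) (vs ! 0)" using R_reach assms by blast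
  moreover have "creach (lev t) (vs ! 0) (vs ! j)" using R_reach j by blast
  ultimately show "w \<in> ccomp (lev t) (vs ! i)" unfolding ccomp_def using j creach_trans by fastforce
qed

lemma ccomp_single:
  assumes "0 < i" "i < N" "t < fe i"
  shows "ccomp (lev t) (vs ! i) = {vs ! i}"
proof (intro equalityI subsetI)
  fix w assume "w \<in> ccomp (lev t) (vs ! i)"
  then have "creach (lev t) (vs ! i) w" unfolding ccomp_def by simp
  then show "w \<in> {vs ! i}"
  proof (rule creach_closed)
    show "vs ! i \<in> {vs ! i}" by simp
  next
    fix u v assume u: "u \<in> {vs ! i}" "u \<noteq> v" "{u, v} \<in> lev t"
    then obtain j where j: "0 < j" "j < N" "{u, v} = ed j" "fe j \<le> t" using edge_lev by blast
    have "vs ! i \<in> ed j" using u j by auto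
    then have "vs ! i = vs ! par j \<or> vs ! i = vs ! j" unfolding ed_def by auto
    moreover have pj: "par j < j" using par_lt' j by simp
    moreover have pjN: "par j < N" using pj j by simp
    ultimately have "i = par j \<or> i = j" using vs_nth_eq[of i "par j"] vs_nth_eq[of i j] assms(2) j(2) by blast
    moreover have "i \<noteq> j" using j assms by auto
    ultimately have "i = par j" by simp
    then have "fe i < fe j" using fe_par[OF j(1,2)] assms by simp
    then show "v \<in> {vs ! i}" using j assms by simp
  qed
next
  fix w assume "w \<in> {vs ! i}"
  then show "w \<in> ccomp (lev t) (vs ! i)" unfolding ccomp_def creach_def by simp
qed

lemma rank_lev:
  assumes s: "0 \<le> s" "s \<le> t"
  shows "rank_H0 (lev s) (lev t) = Suc (card {u. u < k \<and> b u \<le> s \<and> t < d u})"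
proof -
  define I where "I = {i. m < i \<and> i < N \<and> fv i \<le> s \<and> t < fe i}"
  have img: "ccomp (lev t) ` cverts (lev s) = insert (R t) ((\<lambda>i. {vs ! i}) ` I)"
  proof (intro equalityI subsetI)
    fix X assume "X \<in> ccomp (lev t) ` cverts (lev s)"
    then obtain i where i: "i < N" "fv i \<le> s" "X = ccomp (lev t) (vs ! i)"
      unfolding cverts_lev by auto
    show "X \<in> insert (R t) ((\<lambda>i. {vs ! i}) ` I)"
    proof (cases "i = 0 \<or> fe i \<le> t")
      case True then show ?thesis using ccomp_R i by simp
    next
      case False
      then have i0: "0 < i" "t < fe i" by auto
      have "m < i"
      proof (rule ccontr)
        assume "\<not> m < i"
        then have "fv i = fe i" using fv_le_fe(2)[OF i0(1) i(1)] by simp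
        then show False using i s i0 by simp
      qed
      then have "i \<in> I" unfolding I_def using i i0 by simp
      then show ?thesis using ccomp_single[OF i0(1) i(1) i0(2)] i by simp
    qed
  next
    fix X assume "X \<in> insert (R t) ((\<lambda>i. {vs ! i}) ` I)"
    then consider "X = R t" | i where "i \<in> I" "X = {vs ! i}" by auto
    then show "X \<in> ccomp (lev t) ` cverts (lev s)"
    proof cases
      case 1
      have "vs ! 0 \<in> cverts (lev s)" unfolding cverts_lev using N_pos fv_0 s by auto
      moreover have "ccomp (lev t) (vs ! 0) = R t" using ccomp_R N_pos by simp
      ultimately show ?thesis using 1 by force
    next
      case (2 i)
      then have i: "m < i" "i < N" "fv i \<le> s" "t < fe i" unfolding I_def by auto
      have "vs ! i \<in> cverts (lev s)" unfolding cverts_lev using i by auto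
      moreover have "ccomp (lev t) (vs ! i) = {vs ! i}" using ccomp_single i by simp
      ultimately show ?thesis using 2 by force
    qed
  qed
  have notin: "R t \<notin> (\<lambda>i. {vs ! i}) ` I"
  proof
    assume "R t \<in> (\<lambda>i. {vs ! i}) ` I"
    then obtain i where i: "i \<in> I" "R t = {vs ! i}" by auto
    have "vs ! 0 \<in> R t" unfolding R_def using N_pos by auto
    then have "vs ! 0 = vs ! i" using i by simp
    then show False using i vs_nth_eq[of 0 i] N_pos unfolding I_def by auto
  qed
  have injI: "inj_on (\<lambda>i. {vs ! i}) I"
  proof (rule inj_onI)
    fix i j assume ij: "i \<in> I" "j \<in> I" "{vs ! i} = {vs ! j}"
    then have "i < N" "j < N" "vs ! i = vs ! j" unfolding I_def by auto
    then show "i = j" using vs_nth_eq by blast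
  qed
  have finI: "finite I" unfolding I_def by simp
  have "rank_H0 (lev s) (lev t) = Suc (card I)"
    unfolding rank_H0_def img using notin injI finI by (simp add: card_image)
  moreover have "I = (\<lambda>u. u + Suc m) ` {u. u < k \<and> b u \<le> s \<and> t < d u}"
  proof (intro equalityI subsetI)
    fix i assume "i \<in> I"
    then have i: "m < i" "i < N" "fv i \<le> s" "t < fe i" unfolding I_def by auto
    then have "i - Suc m < k" "b (i - Suc m) \<le> s" "t < d (i - Suc m)"
      using N_eq fv_high fe_high by auto
    moreover have "i = (i - Suc m) + Suc m" using i by simp
    ultimately show "i \<in> (\<lambda>u. u + Suc m) ` {u. u < k \<and> b u \<le> s \<and> t < d u}" by blast
  next
    fix i assume "i \<in> (\<lambda>u. u + Suc m) ` {u. u < k \<and> b u \<le> s \<and> t < d u}"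
    then obtain u where u: "u < k" "b u \<le> s" "t < d u" "i = u + Suc m" by auto
    then show "i \<in> I" unfolding I_def using N_eq fv_high fe_high by auto
  qed
  then have "card I = card {u. u < k \<and> b u \<le> s \<and> t < d u}"
    by (simp add: card_image inj_on_def)
  ultimately show ?thesis by simp
qed

lemma rank_sum:
  assumes "0 \<le> s" "s \<le> t"
  shows "int (rank_H0 (lev s) (lev t)) = 1 + (\<Sum>u<k. of_bool (b u \<le> s) * of_bool (t < d u))"
proof -
  have "(\<Sum>u<k. (of_bool (b u \<le> s) :: int) * of_bool (t < d u)) = (\<Sum>u<k. of_bool (b u \<le> s \<and> t < d u))"
    by (intro sum.cong) auto
  also have "\<dots> = int (card ({..<k} \<inter> {u. b u \<le> s \<and> t < d u}))" by simp
  also have "{..<k} \<inter> {u. b u \<le> s \<and> t < d u} = {u. u < k \<and> b u \<le> s \<and> t < d u}" by auto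
  finally show ?thesis using rank_lev[OF assms] by simp
qed

definition "C = insert 0 (b ` {..<k} \<union> d ` {..<k})"

lemma crit_eq: "critical_values (simplices V E) F = C"
proof (intro equalityI subsetI)
  fix x assume "x \<in> critical_values (simplices V E) F"
  then obtain \<sigma> where s: "\<sigma> \<in> simplices V E" "x = F \<sigma>" "\<forall>\<tau>\<in>simplices V E. F \<tau> = F \<sigma> \<longrightarrow> \<tau> = \<sigma>"
    unfolding critical_values_def by blast
  then have nb: "\<not> (\<exists>i. 0 < i \<and> i \<le> m \<and> (\<sigma> = {vs ! i} \<or> \<sigma> = ed i))" using unique_iff by blast
  show "x \<in> C" using s(1)
  proof (cases rule: S_cases)
    case (1 i)
    show ?thesis
    proof (cases "i = 0")
      case True then show ?thesis using s(2) 1 F_vert fv_0 unfolding C_def by simp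
    next
      case False
      have "m < i"
      proof (rule ccontr)
        assume "\<not> m < i"
        then have "0 < i \<and> i \<le> m \<and> (\<sigma> = {vs ! i} \<or> \<sigma> = ed i)" using False 1 by simp
        then show False using nb by blast
      qed
      then have "x = b (i - Suc m)" "i - Suc m < k" using s(2) 1 F_vert fv_high N_eq by auto
      then show ?thesis unfolding C_def by auto
    qed
  next
    case (2 i)
    have "m < i"
    proof (rule ccontr)
      assume "\<not> m < i"
      then have "0 < i \<and> i \<le> m \<and> (\<sigma> = {vs ! i} \<or> \<sigma> = ed i)" using 2 by simp
      then show False using nb by blast
    qed
    then have "x = d (i - Suc m)" "i - Suc m < k" using s(2) 2 F_edge fe_high N_eq by auto
    then show ?thesis unfolding C_def by auto
  qed
next
  fix x assume "x \<in> C"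
  then consider "x = 0" | u where "u < k" "x = b u" | u where "u < k" "x = d u" unfolding C_def by auto
  then show "x \<in> critical_values (simplices V E) F"
  proof cases
    case 1
    have "\<not> (\<exists>i. 0 < i \<and> i \<le> m \<and> ({vs ! 0} = {vs ! i} \<or> {vs ! 0} = ed i))"
    proof
      assume "\<exists>i. 0 < i \<and> i \<le> m \<and> ({vs ! 0} = {vs ! i} \<or> {vs ! 0} = ed i)"
      then obtain i where i: "0 < i" "i \<le> m" "{vs ! 0} = {vs ! i} \<or> {vs ! 0} = ed i" by blast
      have iN: "i < N" using i N_eq by simp
      show False using i(3)
      proof
        assume "{vs ! 0} = {vs ! i}" then show False using vs_nth_eq[of 0 i] iN i N_pos by simp
      next
        assume e: "{vs ! 0} = ed i"
        have "card (ed i) = 2" using card_ed[OF i(1) iN] .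
        then show False using e[symmetric] by simp
      qed
    qed
    then have "\<forall>\<tau>\<in>simplices V E. F \<tau> = F {vs ! 0} \<longrightarrow> \<tau> = {vs ! 0}"
      using unique_iff[OF vert_in_S[OF N_pos]] by blast
    moreover have "F {vs ! 0} = x" using 1 F_vert N_pos fv_0 by simp
    ultimately show ?thesis unfolding critical_values_def using vert_in_S[OF N_pos] by blast
  next
    case (2 u)
    define j where "j = u + Suc m"
    have j: "m < j" "j < N" "j - Suc m = u" using 2 N_eq unfolding j_def by auto
    have "\<not> (\<exists>i. 0 < i \<and> i \<le> m \<and> ({vs ! j} = {vs ! i} \<or> {vs ! j} = ed i))"
    proof
      assume "\<exists>i. 0 < i \<and> i \<le> m \<and> ({vs ! j} = {vs ! i} \<or> {vs ! j} = ed i)"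
      then obtain i where i: "0 < i" "i \<le> m" "{vs ! j} = {vs ! i} \<or> {vs ! j} = ed i" by blast
      have iN: "i < N" using i N_eq by simp
      show False using i(3)
      proof
        assume "{vs ! j} = {vs ! i}" then show False using vs_nth_eq[of j i] iN i j by simp
      next
        assume e: "{vs ! j} = ed i"
        have "card (ed i) = 2" using card_ed[OF i(1) iN] .
        then show False using e[symmetric] by simp
      qed
    qed
    then have "\<forall>\<tau>\<in>simplices V E. F \<tau> = F {vs ! j} \<longrightarrow> \<tau> = {vs ! j}"
      using unique_iff[OF vert_in_S[OF j(2)]] by blast
    moreover have "F {vs ! j} = x" using 2 F_vert j fv_high by simp
    ultimately show ?thesis unfolding critical_values_def using vert_in_S[OF j(2)] by blast
  next
    case (3 u)
    define j where "j = u + Suc m"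
    have j: "m < j" "j < N" "j - Suc m = u" "0 < j" using 3 N_eq unfolding j_def by auto
    have "\<not> (\<exists>i. 0 < i \<and> i \<le> m \<and> (ed j = {vs ! i} \<or> ed j = ed i))"
    proof
      assume "\<exists>i. 0 < i \<and> i \<le> m \<and> (ed j = {vs ! i} \<or> ed j = ed i)"
      then obtain i where i: "0 < i" "i \<le> m" "ed j = {vs ! i} \<or> ed j = ed i" by blast
      have iN: "i < N" using i N_eq by simp
      show False using i(3)
      proof
        assume e: "ed j = {vs ! i}"
        have "card (ed j) = 2" using card_ed[OF j(4) j(2)] .
        then show False using e by simp
      next
        assume "ed j = ed i" then have "j = i" using inj_onD[OF ed_inj] iN i j by simp
        then show False using i j by simp
      qed
    qed
    then have "\<forall>\<tau>\<in>simplices V E. F \<tau> = F (ed j) \<longrightarrow> \<tau> = ed j"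
      using unique_iff[OF ed_in_S[OF j(4) j(2)]] by blast
    moreover have "F (ed j) = x" using 3 F_edge j fe_high by simp
    ultimately show ?thesis unfolding critical_values_def using ed_in_S[OF j(4) j(2)] by blast
  qed
qed

lemma C_nonneg: assumes "x \<in> C" shows "0 \<le> x"
proof -
  consider "x = 0" | u where "u < k" "x = b u" | u where "u < k" "x = d u"
    using assms unfolding C_def by blast
  then show ?thesis
  proof cases
    case 1 then show ?thesis by simp
  next
    case (2 u) then show ?thesis using bd_facts(2)[OF 2(1)] by simp
  next
    case (3 u) then show ?thesis using bd_facts(2,4)[OF 3(1)] by simp
  qed
qed

lemma final_diagram: "morse_diagram V E F = mset_set D"
proof -
  define cs where "cs = sorted_list_of_set C"
  have finC: "finite C" unfolding C_def by simp
  have sw: "sorted_wrt (<) cs" unfolding cs_def by simp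
  have setcs: "set cs = C" unfolding cs_def using finC by simp
  have ne: "cs \<noteq> []" using setcs unfolding C_def by auto
  have cs0: "cs ! 0 = 0"
  proof -
    have "0 \<in> set cs" using setcs unfolding C_def by simp
    then obtain l where l: "l < length cs" "cs ! l = 0" by (auto simp: in_set_conv_nth)
    have "cs ! 0 \<le> cs ! l"
    proof (cases "l = 0")
      case True then show ?thesis by simp
    next
      case False then show ?thesis using sorted_wrt_nth_less[OF sw _ l(1), of 0] by simp
    qed
    moreover have "0 \<le> cs ! 0" using C_nonneg setcs ne by (metis length_greater_0_conv nth_mem)
    ultimately show ?thesis using l by simp
  qed
  have md: "morse_diagram V E F = pers_diagram (map lev cs) cs"
    unfolding morse_diagram_def Let_def crit_eq cs_def lev_def ..
  have rank: "pbetti (map lev cs) i j = 1 + (\<Sum>u<k. of_bool (b u \<le> cs ! i) * of_bool (cs ! j < d u))"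
    if ij: "i \<le> j" "j < length cs" for i j
  proof -
    have "0 \<le> cs ! i" using C_nonneg setcs ij by (metis le_less_trans nth_mem)
    moreover have "cs ! i \<le> cs ! j" using sw ij
      by (cases "i = j") (auto simp: sorted_wrt_nth_less less_imp_le)
    ultimately show ?thesis unfolding pbetti_def using rank_sum ij by simp
  qed
  have "pers_diagram (map lev cs) cs = (\<Sum>u<k. {#(b u, ereal (d u))#}) + {#(cs ! 0, PInfty)#}"
  proof (rule diagram_calc[OF sw _ ne])
    show "length (map lev cs) = length cs" by simp
    show "\<And>u. u < k \<Longrightarrow> b u \<in> set cs" using setcs unfolding C_def by auto
    show "\<And>u. u < k \<Longrightarrow> d u \<in> set cs" using setcs unfolding C_def by auto
    show "\<And>u. u < k \<Longrightarrow> cs ! 0 < b u" using cs0 bd_facts by fastforce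
    show "\<And>u. u < k \<Longrightarrow> b u < d u" using bd_facts by blast
  qed (use rank in auto)
  moreover have "mset_set D = (\<Sum>u<k. {#(b u, ereal (d u))#}) + {#(0, PInfty)#}"
  proof -
    have D: "D = insert (0, PInfty) D'" unfolding D'_def
      using cons unfolding consistent_diagram_def by auto
    have notin: "(0, PInfty) \<notin> D'" unfolding D'_def by simp
    have "mset_set D = mset_set (insert (0, PInfty) D')" using D by (rule arg_cong)
    also have "\<dots> = add_mset (0, PInfty) (mset_set D')" using mset_set.insert[OF fin_D' notin] .
    finally have "mset_set D = add_mset (0, PInfty) (mset_set D')" .
    moreover have "mset_set D' = (\<Sum>u<k. {#(b u, ereal (d u))#})"
    proof -
      have "mset_set D' = image_mset q (mset_set {..<k})"
        using image_mset_mset_set[OF q_inj] q_surj by simp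
      also have "\<dots> = (\<Sum>u<k. {#q u#})" by (simp add: mset_set_sum)
      also have "\<dots> = (\<Sum>u<k. {#(b u, ereal (d u))#})" using q_pair by (intro sum.cong) auto
      finally show ?thesis .
    qed
    ultimately show ?thesis by simp
  qed
  ultimately show ?thesis using md cs0 by simp
qed

end

theorem theorem4p8:
  fixes V :: "'a set" and E :: "'a set set" and D :: "(real \<times> ereal) set"
  assumes "is_tree V E"
    and "consistent_diagram D (card (simplices V E))"
  shows "\<exists>f. discrete_morse V E f \<and> morse_diagram V E f = mset_set D"
proof -
  obtain vs par where vs: "vs \<noteq> []" "distinct vs" "set vs = V"
     "\<forall>i. 0 < i \<and> i < length vs \<longrightarrow> par i < i"
     "E = {{vs ! (par i), vs ! i} | i. 0 < i \<and> i < length vs}"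
    using tree_order[OF assms(1)] by blast
  interpret tconstr V E vs par D
    using vs assms(2) by unfold_locales auto
  show ?thesis using morse final_diagram by blast
qed

end
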